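(* Let $X$ be a complex Banach space and $T:X\to X$ a recurrent bounded linear operator. Let $\{T\}'=\{A: A \text{ bounded linear on } X,\ AT=TA\}$ be the commutant of $T$, and suppose there is a subset $\mathcal M\subset\{T\}'$ such that the set $\{x\in X:\overline{\{Ax:A\in\mathcal M\}}=X\}$ is residual in $X$. Then $T\oplus T$ is recurrent on $X\oplus X$.
   Context: An operator $S$ on a Banach space $Y$ is recurrent if for every non-empty open $U\subset Y$ there is a positive integer $k$ with $U\cap S^{-k}(U)\neq\emptyset$. $T\oplus T$ acts on $X\oplus X$ by $(x,y)\mapsto(Tx,Ty)$. A set is residual if it contains a countable intersection of dense open sets. *)

theory Defs
  imports "HOL-Analysis.Analysis"
begin

text \<open>Complex Banach spaces (not in the distribution library): a real Banach space
with a complex scalar multiplication making it a complex normed vector space.\<close>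
class scaleC =
  fixes scaleC :: "complex \<Rightarrow> 'a \<Rightarrow> 'a" (infixr \<open>*\<^sub>C\<close> 75)

class complex_banach = banach + scaleC +
  assumes scaleC_add_right: "a *\<^sub>C (x + y) = a *\<^sub>C x + a *\<^sub>C y"
    and scaleC_add_left: "(a + b) *\<^sub>C x = a *\<^sub>C x + b *\<^sub>C x"
    and scaleC_scaleC: "a *\<^sub>C (b *\<^sub>C x) = (a * b) *\<^sub>C x"
    and scaleC_one: "1 *\<^sub>C x = x"
    and scaleR_scaleC: "scaleR r x = complex_of_real r *\<^sub>C x"
    and norm_scaleC: "norm (a *\<^sub>C x) = cmod a * norm x"

definition bounded_clinear :: "('a::complex_banach \<Rightarrow> 'b::complex_banach) \<Rightarrow> bool" where
  "bounded_clinear f \<longleftrightarrow>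
     (\<forall>x y. f (x + y) = f x + f y) \<and> (\<forall>c x. f (c *\<^sub>C x) = c *\<^sub>C f x) \<and>
     (\<exists>K. \<forall>x. norm (f x) \<le> norm x * K)"

definition recurrent :: "('b::topological_space \<Rightarrow> 'b) \<Rightarrow> bool" where
  "recurrent S \<longleftrightarrow>
     (\<forall>U. open U \<and> U \<noteq> {} \<longrightarrow> (\<exists>k::nat. k > 0 \<and> U \<inter> (S ^^ k) -` U \<noteq> {}))"

definition residual :: "'b::topological_space set \<Rightarrow> bool" where
  "residual R \<longleftrightarrow>
     (\<exists>\<F>. countable \<F> \<and> (\<forall>G\<in>\<F>. open G \<and> closure G = UNIV) \<and> \<Inter>\<F> \<subseteq> R)"

definition dsum_op :: "('a \<Rightarrow> 'a) \<Rightarrow> ('a \<times> 'a \<Rightarrow> 'a \<times> 'a)" where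
  "dsum_op T = (\<lambda>(x, y). (T x, T y))"

end

theory Submission
  imports Defs
begin

lemma bcl_cont:
  fixes A :: "'a::complex_banach \<Rightarrow> 'a"
  assumes "bounded_clinear A"
  shows "continuous_on UNIV A"
proof -
  from assms obtain K where add: "\<And>x y. A (x + y) = A x + A y"
    and sc: "\<And>c x. A (c *\<^sub>C x) = c *\<^sub>C A x" and K: "\<And>x. norm (A x) \<le> norm x * K"
    unfolding bounded_clinear_def by blast
  have "bounded_linear A"
  proof (rule bounded_linear_intro[where K=K])
    show "A (x + y) = A x + A y" for x y by (rule add)
    show "A (r *\<^sub>R x) = r *\<^sub>R A x" for r x by (simp add: scaleR_scaleC sc)
    show "norm (A x) \<le> norm x * K" for x by (rule K)
  qed
  then show ?thesis by (simp add: linear_continuous_on)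
qed

lemma residual_meets:
  fixes R :: "'a::complete_space set"
  assumes "residual R" "open U" "U \<noteq> {}"
  shows "U \<inter> R \<noteq> {}"
proof -
  from assms(1) obtain F where F: "countable F" "\<forall>G\<in>F. open G \<and> closure G = UNIV" "\<Inter>F \<subseteq> R"
    unfolding residual_def by blast
  have "euclidean closure_of \<Inter>F = topspace euclidean"
    by (rule Baire_category) (use F completely_metrizable_space_euclidean in auto)
  then have "closure (\<Inter>F) = UNIV" by simp
  then have "U \<inter> closure (\<Inter>F) \<noteq> {}" using assms(3) by simp
  then have "U \<inter> \<Inter>F \<noteq> {}" using open_Int_closure_eq_empty[OF assms(2), of "\<Inter>F"] by blast
  then show ?thesis using F(3) by blast
qed

lemma comm_pow:
  assumes "A \<circ> T = T \<circ> A"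
  shows "A ((T ^^ k) x) = (T ^^ k) (A x)"
proof (induction k)
  case (Suc k)
  then show ?case using fun_cong[OF assms] by simp
qed simp

lemma dsum_pow: "(dsum_op T ^^ k) (x, y) = ((T ^^ k) x, (T ^^ k) y)"
  by (induction k) (auto simp: dsum_op_def)

theorem theorem9p1:
  fixes T :: "'a::{complex_banach} \<Rightarrow> 'a"
    and \<M> :: "('a \<Rightarrow> 'a) set"
  assumes "bounded_clinear T"
    and "recurrent T"
    and "\<M> \<subseteq> {A. bounded_clinear A \<and> A \<circ> T = T \<circ> A}"
    and "residual {x. closure {A x | A. A \<in> \<M>} = UNIV}"
  shows "recurrent (dsum_op T)"
  unfolding recurrent_def
proof (intro allI impI)
  fix W :: "('a \<times> 'a) set"
  assume W: "open W \<and> W \<noteq> {}"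
  then obtain p where "p \<in> W" by blast
  then obtain U V where UV: "open U" "open V" "p \<in> U \<times> V" "U \<times> V \<subseteq> W"
    using W open_prod_elim by metis
  have "U \<noteq> {}" "V \<noteq> {}" using UV(3) by auto
  then obtain x where x: "x \<in> U" "closure {A x | A. A \<in> \<M>} = UNIV"
    using residual_meets[OF assms(4) UV(1)] by blast
  have "V \<inter> closure {A x | A. A \<in> \<M>} \<noteq> {}" using x(2) \<open>V \<noteq> {}\<close> by simp
  then have "V \<inter> {A x | A. A \<in> \<M>} \<noteq> {}"
    using open_Int_closure_eq_empty[OF UV(2), of "{A x | A. A \<in> \<M>}"] by blast
  then obtain A where A: "A \<in> \<M>" "A x \<in> V" by blast
  have Ab: "bounded_clinear A" "A \<circ> T = T \<circ> A" using A(1) assms(3) by auto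
  define U' where "U' = U \<inter> A -` V"
  have "open U'" unfolding U'_def
    using open_vimage[OF UV(2) bcl_cont[OF Ab(1)]] UV(1) by auto
  moreover have "x \<in> U'" using x A unfolding U'_def by auto
  ultimately obtain k where k: "k > 0" "U' \<inter> (T ^^ k) -` U' \<noteq> {}"
    using assms(2) unfolding recurrent_def by blast
  then obtain z where z: "z \<in> U'" "(T ^^ k) z \<in> U'" by blast
  have "(z, A z) \<in> W" using z UV(4) unfolding U'_def by auto
  moreover have "(dsum_op T ^^ k) (z, A z) \<in> W"
    using z UV(4) comm_pow[OF Ab(2), of k z] unfolding U'_def dsum_pow by auto
  ultimately show "\<exists>k>0. W \<inter> (dsum_op T ^^ k) -` W \<noteq> {}" using k(1) by blast
qed

end
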